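(* Every monotone protocol for the game $G_n$ has cost at least $\lfloor\sqrt{n}\rfloor$.
   Context: The game $G_n$ ($n$ a positive integer): Alice receives, as a stream, a permutation $\sigma=(\sigma_1,\dots,\sigma_n)$ of $[n]=\{1,\dots,n\}$ followed by a bit $b\in\{0,1\}$. She has an array $\mathbf{v}=(v_1,\dots,v_n)$ whose cells are initially empty. For each $i<n$, upon receiving $\sigma_i$ she writes a bit in cell $\sigma_i$, which cannot later be changed. Upon receiving $\sigma_n$ and $b$ she writes $b$ in cell $\sigma_n$. Bob receives the completed array $\mathbf{v}\in\{0,1\}^n$ and outputs a set $J\subseteq[n]$ as a function of $\mathbf{v}$. A protocol is valid if $\sigma_n\in J$ for all $\sigma,b$; its cost is the maximum of $|J|$ over all $\sigma,b$. Protocols are required to be valid. A partial assignment is an element of $\{0,1,*\}^n$ ($*$ = unfilled). An order oblivious protocol is one given by maps $A_1,\dots,A_n$ from partial assignments to $\{0,1\}$: when $\sigma_i$ ($i<n$) arrives and the current partial assignment is $\mathbf{v}$, Alice writes $A_{\sigma_i}(\mathbf{v})$ in cell $\sigma_i$. For partial assignments $\alpha,\beta$, $\beta$ extends $\alpha$ ($\beta\ge\alpha$) if $\beta$ is obtained from $\alpha$ by fixing additional cells. The protocol is monotone if it is order oblivious and each $A_i$ is monotone: $\beta\ge\alpha$ implies $A_i(\beta)\ge A_i(\alpha)$. *)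

theory Defs
  imports Main Complex_Main
begin

text \<open>Cells are indexed by [n] = {1..n}. A partial assignment is a map
  nat => bool option (None = unfilled cell), with all cells outside [n] None.
  Bits are booleans (0 = False, 1 = True).\<close>

type_synonym passign = "nat \<Rightarrow> bool option"

definition partial_assignment :: "nat \<Rightarrow> passign \<Rightarrow> bool" where
  "partial_assignment n \<alpha> \<longleftrightarrow> (\<forall>i. i \<notin> {1..n} \<longrightarrow> \<alpha> i = None)"

definition extends :: "passign \<Rightarrow> passign \<Rightarrow> bool" where
  "extends \<beta> \<alpha> \<longleftrightarrow> (\<forall>i. \<alpha> i \<noteq> None \<longrightarrow> \<beta> i = \<alpha> i)"

definition is_perm :: "nat \<Rightarrow> nat list \<Rightarrow> bool" where
  "is_perm n \<sigma> \<longleftrightarrow> distinct \<sigma> \<and> set \<sigma> = {1..n}"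

text \<open>Order oblivious protocol for Alice: maps A i (for cell i) from partial
  assignments to bits. Alice processes the arriving cells in order.\<close>
fun fill :: "(nat \<Rightarrow> passign \<Rightarrow> bool) \<Rightarrow> nat list \<Rightarrow> passign \<Rightarrow> passign" where
  "fill A [] v = v"
| "fill A (x # xs) v = fill A xs (v(x := Some (A x v)))"

definition final_array :: "(nat \<Rightarrow> passign \<Rightarrow> bool) \<Rightarrow> nat list \<Rightarrow> bool \<Rightarrow> passign" where
  "final_array A \<sigma> b = (fill A (butlast \<sigma>) (\<lambda>_. None))(last \<sigma> := Some b)"

definition monotone_protocol :: "nat \<Rightarrow> (nat \<Rightarrow> passign \<Rightarrow> bool) \<Rightarrow> bool" where
  "monotone_protocol n A \<longleftrightarrow>
     (\<forall>i\<in>{1..n}. \<forall>\<alpha> \<beta>. partial_assignment n \<alpha> \<and> partial_assignment n \<beta> \<and> extends \<beta> \<alpha>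
        \<longrightarrow> A i \<alpha> \<le> A i \<beta>)"

definition valid_protocol :: "nat \<Rightarrow> (nat \<Rightarrow> passign \<Rightarrow> bool) \<Rightarrow> (passign \<Rightarrow> nat set) \<Rightarrow> bool" where
  "valid_protocol n A Bob \<longleftrightarrow>
     (\<forall>\<sigma> b. is_perm n \<sigma> \<longrightarrow>
        Bob (final_array A \<sigma> b) \<subseteq> {1..n} \<and> last \<sigma> \<in> Bob (final_array A \<sigma> b))"

definition protocol_cost :: "nat \<Rightarrow> (nat \<Rightarrow> passign \<Rightarrow> bool) \<Rightarrow> (passign \<Rightarrow> nat set) \<Rightarrow> nat" where
  "protocol_cost n A Bob = Max {card (Bob (final_array A \<sigma> b)) | \<sigma> b. is_perm n \<sigma>}"

end

theory Submission
  imports Defs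
begin

definition Mo :: "nat set \<Rightarrow> nat set \<Rightarrow> passign" where
  "Mo Z Y = (\<lambda>i. if i \<in> Z then Some False else if i \<in> Y then Some True else None)"

lemma fill_append: "fill A (xs @ ys) v = fill A ys (fill A xs v)"
  by (induction xs arbitrary: v) auto

lemma mono_use:
  assumes "monotone_protocol n A" "i \<in> {1..n}" "Z \<subseteq> {1..n}" "Y \<subseteq> {1..n}"
    "Z' \<subseteq> Z" "Y' \<subseteq> Y" "Y' \<inter> Z = {}" "A i (Mo Z' Y')"
  shows "A i (Mo Z Y)"
proof -
  have pa1: "partial_assignment n (Mo Z Y)" using assms(3,4)
    unfolding partial_assignment_def Mo_def by auto
  have pa2: "partial_assignment n (Mo Z' Y')" using assms(3-6)
    unfolding partial_assignment_def Mo_def by auto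
  have ex: "extends (Mo Z Y) (Mo Z' Y')" using assms(5-7)
    unfolding extends_def Mo_def by auto
  have "A i (Mo Z' Y') \<le> A i (Mo Z Y)"
    using assms(1,2) pa1 pa2 ex unfolding monotone_protocol_def by blast
  then show ?thesis using assms(8) by (simp add: le_bool_def)
qed

inductive Fz :: "nat \<Rightarrow> (nat \<Rightarrow> passign \<Rightarrow> bool) \<Rightarrow> nat set \<Rightarrow> bool" for n A where
  Fz_empty: "Fz n A {}"
| Fz_ins: "Fz n A S \<Longrightarrow> x \<in> {1..n} \<Longrightarrow> x \<notin> S \<Longrightarrow> \<not> A x (Mo S {}) \<Longrightarrow> Fz n A (insert x S)"

lemma Fz_sub: "Fz n A S \<Longrightarrow> S \<subseteq> {1..n}"
  by (induction rule: Fz.induct) auto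

lemma Fz_list: "Fz n A S \<Longrightarrow> \<exists>xs. distinct xs \<and> set xs = S \<and> fill A xs (\<lambda>_. None) = Mo S {}"
proof (induction rule: Fz.induct)
  case Fz_empty
  then show ?case by (rule exI[of _ "[]"]) (auto simp: Mo_def)
next
  case (Fz_ins S x)
  then obtain xs where xs: "distinct xs" "set xs = S" "fill A xs (\<lambda>_. None) = Mo S {}" by blast
  have "fill A (xs @ [x]) (\<lambda>_. None) = (Mo S {})(x := Some False)"
    using xs Fz_ins by (simp add: fill_append)
  also have "\<dots> = Mo (insert x S) {}" by (auto simp: Mo_def)
  finally show ?case using xs Fz_ins by (intro exI[of _ "xs @ [x]"]) auto
qed

lemma Fz_down: assumes "monotone_protocol n A" shows "Fz n A S \<Longrightarrow> T \<subseteq> S \<Longrightarrow> Fz n A T"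
proof (induction arbitrary: T rule: Fz.induct)
  case Fz_empty
  then show ?case by (simp add: Fz.Fz_empty)
next
  case (Fz_ins S x)
  have IH: "Fz n A (T - {x})" using Fz_ins.IH Fz_ins.prems by blast
  show ?case
  proof (cases "x \<in> T")
    case False
    then show ?thesis using IH by simp
  next
    case True
    have "\<not> A x (Mo (T - {x}) {})"
    proof
      assume "A x (Mo (T - {x}) {})"
      then have "A x (Mo S {})"
        using mono_use[OF assms, of x S "{}" "T - {x}" "{}"] Fz_ins Fz_sub[OF Fz_ins(1)] by auto
      then show False using Fz_ins by simp
    qed
    then have "Fz n A (insert x (T - {x}))" using IH Fz_ins by (intro Fz.Fz_ins) auto
    then show ?thesis using True by (simp add: insert_absorb)
  qed
qed

lemma fill_ones:
  assumes "monotone_protocol n A" "Z \<subseteq> {1..n}" "Y0 \<subseteq> {1..n}" "set ys \<subseteq> {1..n}"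
    "set ys \<inter> Z = {}" "Y0 \<inter> Z = {}" "\<forall>y\<in>set ys. A y (Mo Z {})"
  shows "fill A ys (Mo Z Y0) = Mo Z (Y0 \<union> set ys)"
  using assms(3-7)
proof (induction ys arbitrary: Y0)
  case Nil
  then show ?case by simp
next
  case (Cons y ys)
  have "A y (Mo Z Y0)"
    using mono_use[OF assms(1), of y Z Y0 Z "{}"] Cons.prems assms(2) by auto
  then have "fill A (y # ys) (Mo Z Y0) = fill A ys (Mo Z (insert y Y0))"
    using Cons.prems by (simp add: Mo_def fun_upd_def) (rule arg_cong[where f="fill A ys"]; auto)
  also have "\<dots> = Mo Z (insert y Y0 \<union> set ys)"
    using Cons by (intro Cons.IH) auto
  finally show ?case by simp
qed

definition V :: "nat \<Rightarrow> nat set \<Rightarrow> passign" where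
  "V n T = (\<lambda>i. if i \<in> T then Some False else if i \<in> {1..n} then Some True else None)"

lemma lastable:
  assumes mono: "monotone_protocol n A" and valid: "valid_protocol n A Bob"
    and j: "j \<in> {1..n}" and T: "T \<subseteq> {1..n}" and F: "Fz n A (T - {j})"
    and ones: "\<forall>y\<in>{1..n} - T - {j}. A y (Mo (T - {j}) {})"
  shows "j \<in> Bob (V n T) \<and> (\<exists>\<sigma> b. is_perm n \<sigma> \<and> final_array A \<sigma> b = V n T)"
proof -
  obtain xs where xs: "distinct xs" "set xs = T - {j}" "fill A xs (\<lambda>_. None) = Mo (T - {j}) {}"
    using Fz_list[OF F] by blast
  define Y where "Y = {1..n} - T - {j}"
  define ys where "ys = sorted_list_of_set Y"
  have ys: "distinct ys" "set ys = Y" unfolding ys_def Y_def by auto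
  define \<sigma> where "\<sigma> = xs @ ys @ [j]"
  have perm: "is_perm n \<sigma>" unfolding is_perm_def \<sigma>_def using xs ys j T
    by (auto simp: Y_def)
  have bl: "butlast \<sigma> = xs @ ys" "last \<sigma> = j" unfolding \<sigma>_def by (simp_all add: butlast_append)
  have "fill A ys (Mo (T - {j}) {}) = Mo (T - {j}) ({} \<union> set ys)"
    using fill_ones[OF mono, of "T - {j}" "{}" ys] T ys ones by (auto simp: Y_def)
  then have fa: "final_array A \<sigma> (j \<notin> T) = (Mo (T - {j}) Y)(j := Some (j \<notin> T))"
    unfolding final_array_def bl using xs ys by (simp add: fill_append)
  have eq: "(Mo (T - {j}) Y)(j := Some (j \<notin> T)) = V n T"
    using j by (auto simp: Mo_def V_def Y_def fun_eq_iff)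
  have "last \<sigma> \<in> Bob (final_array A \<sigma> (j \<notin> T))"
    using valid perm unfolding valid_protocol_def by blast
  then show ?thesis using fa eq bl perm by auto
qed

lemma cost_bound:
  assumes valid: "valid_protocol n A Bob"
    and L: "\<forall>j\<in>L. j \<in> Bob v \<and> (\<exists>\<sigma> b. is_perm n \<sigma> \<and> final_array A \<sigma> b = v)"
  shows "card L \<le> protocol_cost n A Bob"
proof (cases "L = {}")
  case True
  then show ?thesis by simp
next
  case False
  then obtain j where "j \<in> L" by blast
  then obtain \<sigma> b where sb: "is_perm n \<sigma>" "final_array A \<sigma> b = v" using L by blast
  have sub: "Bob v \<subseteq> {1..n}" using valid sb unfolding valid_protocol_def by blast
  have fp: "finite {\<sigma>. is_perm n \<sigma>}"
  proof (rule finite_subset)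
    show "{\<sigma>. is_perm n \<sigma>} \<subseteq> {xs. set xs \<subseteq> {1..n} \<and> length xs \<le> n}"
      unfolding is_perm_def using distinct_card by fastforce
    show "finite {xs. set xs \<subseteq> {1..n} \<and> length xs \<le> n}"
      by (rule finite_lists_length_le) simp
  qed
  have fin: "finite {card (Bob (final_array A \<sigma> b)) | \<sigma> b. is_perm n \<sigma>}"
  proof (rule finite_subset)
    show "{card (Bob (final_array A \<sigma> b)) | \<sigma> b. is_perm n \<sigma>} \<subseteq>
      (\<lambda>p. card (Bob (final_array A (fst p) (snd p)))) ` ({\<sigma>. is_perm n \<sigma>} \<times> UNIV)"
      by force
    show "finite ((\<lambda>p. card (Bob (final_array A (fst p) (snd p)))) ` ({\<sigma>. is_perm n \<sigma>} \<times> (UNIV::bool set)))"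
      using fp by simp
  qed
  have "card (Bob v) \<le> protocol_cost n A Bob"
    unfolding protocol_cost_def using sb by (intro Max_ge[OF fin]) blast
  moreover have "card L \<le> card (Bob v)"
    using L sub by (intro card_mono) (auto intro: finite_subset)
  ultimately show ?thesis by simp
qed

theorem theorem3:
  fixes n :: nat
    and A :: "nat \<Rightarrow> passign \<Rightarrow> bool"
    and Bob :: "passign \<Rightarrow> nat set"
  assumes "n \<ge> 1"
    and "monotone_protocol n A"
    and "valid_protocol n A Bob"
  shows "\<lfloor>sqrt (real n)\<rfloor> \<le> int (protocol_cost n A Bob)"
proof -
  note mono = assms(2) and valid = assms(3)
  define c where "c = protocol_cost n A Bob"
  have "\<exists>S. Fz n A S \<and> (\<forall>T. Fz n A T \<longrightarrow> card T \<le> card S)"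
  proof (rule ex_has_greatest_nat[of "Fz n A" "{}" card "Suc n"])
    show "Fz n A {}" by (rule Fz_empty)
    show "\<forall>T. Fz n A T \<longrightarrow> card T < Suc n"
    proof (intro allI impI)
      fix T assume "Fz n A T"
      then have "T \<subseteq> {1..n}" by (rule Fz_sub)
      then have "card T \<le> card {1..n}" by (intro card_mono) auto
      then show "card T < Suc n" by simp
    qed
  qed
  then obtain S where FS: "Fz n A S" and Smax: "\<And>T. Fz n A T \<Longrightarrow> card T \<le> card S" by blast
  have Ssub: "S \<subseteq> {1..n}" using FS by (rule Fz_sub)
  have finS: "finite S" using Ssub finite_subset by blast
  define U where "U = {1..n} - S"
  have maxface: "A w (Mo T {})" if FT: "Fz n A T" and cT: "card T = card S"
    and w: "w \<in> {1..n}" "w \<notin> T" for T w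
  proof (rule ccontr)
    assume "\<not> A w (Mo T {})"
    then have "Fz n A (insert w T)" using FT w by (intro Fz_ins) auto
    then have "card (insert w T) \<le> card S" by (rule Smax)
    moreover have "finite T" using Fz_sub[OF FT] finite_subset by blast
    ultimately show False using cT w by simp
  qed
  have Uone: "A u (Mo S {})" if "u \<in> U" for u
    using maxface[OF FS refl] that by (auto simp: U_def)
  define good where "good = {s \<in> S. \<forall>u\<in>U. A u (Mo (S - {s}) {})}"
  define B where "B u = {s \<in> S. \<not> A u (Mo (S - {s}) {})}" for u
  have L0: "card (good \<union> U) \<le> c"
    unfolding c_def
  proof (rule cost_bound[OF valid, where v="V n S"], intro ballI)
    fix j assume "j \<in> good \<union> U"
    then show "j \<in> Bob (V n S) \<and> (\<exists>\<sigma> b. is_perm n \<sigma> \<and> final_array A \<sigma> b = V n S)"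
    proof
      assume jg: "j \<in> good"
      show ?thesis
      proof (rule lastable[OF mono valid])
        show "j \<in> {1..n}" using jg Ssub by (auto simp: good_def)
        show "S \<subseteq> {1..n}" by (rule Ssub)
        show "Fz n A (S - {j})" using Fz_down[OF mono FS] by blast
        show "\<forall>y\<in>{1..n} - S - {j}. A y (Mo (S - {j}) {})" using jg by (auto simp: good_def U_def)
      qed
    next
      assume jU: "j \<in> U"
      have e: "S - {j} = S" using jU by (auto simp: U_def)
      show ?thesis
      proof (rule lastable[OF mono valid])
        show "j \<in> {1..n}" using jU by (auto simp: U_def)
        show "S \<subseteq> {1..n}" by (rule Ssub)
        show "Fz n A (S - {j})" using FS e by simp
        show "\<forall>y\<in>{1..n} - S - {j}. A y (Mo (S - {j}) {})" using Uone e by (auto simp: U_def)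
      qed
    qed
  qed
  have LB: "card (B u) + 1 \<le> c" if uU: "u \<in> U" for u
  proof -
    have uS: "u \<notin> S" "u \<in> {1..n}" using uU by (auto simp: U_def)
    have "card (insert u (B u)) \<le> c"
      unfolding c_def
    proof (rule cost_bound[OF valid, where v="V n (insert u S)"], intro ballI)
      fix j assume "j \<in> insert u (B u)"
      then show "j \<in> Bob (V n (insert u S)) \<and> (\<exists>\<sigma> b. is_perm n \<sigma> \<and> final_array A \<sigma> b = V n (insert u S))"
      proof
        assume ju: "j = u"
        have e: "insert u S - {j} = S" using ju uS by auto
        show ?thesis
        proof (rule lastable[OF mono valid])
          show "j \<in> {1..n}" using ju uS by simp
          show "insert u S \<subseteq> {1..n}" using Ssub uS by simp
          show "Fz n A (insert u S - {j})" using FS e by simp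
          show "\<forall>y\<in>{1..n} - insert u S - {j}. A y (Mo (insert u S - {j}) {})"
            using Uone e by (auto simp: U_def)
        qed
      next
        assume jB: "j \<in> B u"
        have jS: "j \<in> S" "j \<noteq> u" using jB uS by (auto simp: B_def)
        have e: "insert u S - {j} = insert u (S - {j})" using jS by auto
        have F1: "Fz n A (insert u (S - {j}))"
        proof (rule Fz_ins)
          show "Fz n A (S - {j})" using Fz_down[OF mono FS] by blast
          show "u \<in> {1..n}" "u \<notin> S - {j}" using uS by auto
          show "\<not> A u (Mo (S - {j}) {})" using jB by (simp add: B_def)
        qed
        have cF1: "card (insert u (S - {j})) = card S"
          using finS jS uS by (simp add: card_Diff_singleton) (metis Suc_pred card_gt_0_iff empty_iff)
        show ?thesis
        proof (rule lastable[OF mono valid])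
          show "j \<in> {1..n}" using jS Ssub by auto
          show "insert u S \<subseteq> {1..n}" using Ssub uS by simp
          show "Fz n A (insert u S - {j})" using F1 e by simp
          show "\<forall>y\<in>{1..n} - insert u S - {j}. A y (Mo (insert u S - {j}) {})"
            using maxface[OF F1 cF1] e by auto
        qed
      qed
    qed
    moreover have "u \<notin> B u" using uS by (auto simp: B_def)
    moreover have "finite (B u)" using finS by (auto simp: B_def)
    ultimately show ?thesis by simp
  qed
  have finU: "finite U" by (simp add: U_def)
  have Scov: "S \<subseteq> good \<union> (\<Union>u\<in>U. B u)" by (auto simp: good_def B_def)
  have "card S \<le> card (good \<union> (\<Union>u\<in>U. B u))"
    using Scov finU finS by (intro card_mono) (auto simp: good_def B_def)
  also have "\<dots> \<le> card good + card (\<Union>u\<in>U. B u)" by (rule card_Un_le)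
  also have "card (\<Union>u\<in>U. B u) \<le> (\<Sum>u\<in>U. card (B u))" using finU by (rule card_UN_le)
  also have "(\<Sum>u\<in>U. card (B u)) \<le> of_nat (card U) * (c - 1)"
    using LB by (intro sum_bounded_above) fastforce
  finally have cS: "card S \<le> card good + card U * (c - 1)" by simp
  have disj: "good \<inter> U = {}" by (auto simp: good_def U_def)
  have finG: "finite good" using finS by (auto simp: good_def)
  have cGU: "card good + card U \<le> c" using L0 card_Un_disjoint[OF finG finU disj] by simp
  have nSU: "n = card S + card U"
  proof -
    have "card {1..n} = card S + card ({1..n} - S)"
      using Ssub card_Diff_subset[OF finS Ssub] card_mono[OF _ Ssub] by simp
    then show ?thesis by (simp add: U_def)
  qed
  have cU: "card U \<le> c" using cGU by simp
  have "n \<le> c + card U * (c - 1)" using nSU cS cGU by simp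
  also have "\<dots> \<le> c + c * (c - 1)" using cU by (simp add: mult_right_mono)
  also have "\<dots> = c * c" by (cases c) auto
  finally have ncc: "n \<le> c * c" .
  have "real n \<le> (real c)^2" using ncc by (simp add: power2_eq_square flip: of_nat_mult)
  then have "sqrt (real n) \<le> real c" using real_sqrt_le_mono[of "real n" "(real c)^2"] by simp
  then have "\<lfloor>sqrt (real n)\<rfloor> \<le> \<lfloor>real c\<rfloor>" by (rule floor_mono)
  then show ?thesis by (simp add: c_def)
qed

end
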